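(* Let $G=(V,E)$ be a finite undirected graph with independence number $\alpha(G)$, and for $v\in V$ let $N_{\le1}(v)$ be the set consisting of $v$ and its neighbors in $G$. Let $K\ge1$, $A=\{1,\dots,K\}$, and for each $v\in V$ let $\boldsymbol p(v)=(p(1,v),\dots,p(K,v))$ be a probability distribution on $A$. Define, for $i\in A$ and $v\in V$, $$q(i,v)=1-\prod_{v'\in N_{\le1}(v)}\bigl(1-p(i,v')\bigr).$$ Then for every $i\in A$ (with the convention that terms with $p(i,v)=0$ contribute $0$), $$\sum_{v\in V}\frac{p(i,v)}{q(i,v)}\le\frac{1}{1-e^{-1}}\Bigl(\alpha(G)+\sum_{v\in V}p(i,v)\Bigr).$$
   Context: The independence number $\alpha(G)$ is the maximum size of a set of vertices no two of which are joined by an edge. *)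

theory Defs
  imports Complex_Main
begin

text \<open>A finite simple undirected graph is given by a finite vertex set V and a
  symmetric irreflexive adjacency relation E (only edges between vertices of V matter).\<close>

definition independent_set :: "'a set \<Rightarrow> ('a \<Rightarrow> 'a \<Rightarrow> bool) \<Rightarrow> 'a set \<Rightarrow> bool" where
  "independent_set V E S \<longleftrightarrow> S \<subseteq> V \<and> (\<forall>u\<in>S. \<forall>w\<in>S. \<not> E u w)"

definition independence_number :: "'a set \<Rightarrow> ('a \<Rightarrow> 'a \<Rightarrow> bool) \<Rightarrow> nat" where
  "independence_number V E = Max {card S | S. independent_set V E S}"

definition closed_nbhd :: "'a set \<Rightarrow> ('a \<Rightarrow> 'a \<Rightarrow> bool) \<Rightarrow> 'a \<Rightarrow> 'a set" where
  "closed_nbhd V E v = insert v {u \<in> V. E v u}"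

end

theory Submission
  imports Defs "HOL-Analysis.Analysis"
begin

lemma exp_bound:
  fixes x :: real
  assumes "0 \<le> x"
  shows "(1 - exp (-1)) * min 1 x \<le> 1 - exp (-x)"
proof (cases "x \<le> 1")
  case True
  have "exp ((1 - x) *\<^sub>R 0 + x *\<^sub>R (-1)) \<le> (1 - x) * exp 0 + x * exp (-1)"
    using convex_onD[OF exp_convex, of x 0 "-1"] assms True by auto
  then have "exp (-x) \<le> (1 - x) + x * exp (-1)" by simp
  then show ?thesis using True by (simp add: algebra_simps)
next
  case False
  then have "exp (-x) \<le> exp (-1)" by simp
  then show ?thesis using False by simp
qed

definition PP :: "('a \<Rightarrow> real) \<Rightarrow> 'a set \<Rightarrow> ('a \<Rightarrow> 'a \<Rightarrow> bool) \<Rightarrow> 'a \<Rightarrow> real" where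
  "PP p V E w = (\<Sum>u\<in>closed_nbhd V E w. p u)"

lemma finite_cn: "finite V \<Longrightarrow> finite (closed_nbhd V E v)"
  by (simp add: closed_nbhd_def)

lemma indep_le:
  assumes "finite V" "independent_set V E S"
  shows "card S \<le> independence_number V E"
proof -
  have "finite {card S | S. independent_set V E S}"
  proof -
    have "{card S | S. independent_set V E S} \<subseteq> card ` Pow V"
      by (auto simp: independent_set_def)
    then show ?thesis using assms(1) finite_subset by blast
  qed
  then show ?thesis unfolding independence_number_def using assms(2) by (auto intro: Max_ge)
qed

lemma indep_ex:
  assumes "finite V"
  shows "\<exists>S. independent_set V E S \<and> card S = independence_number V E"
proof -
  have fin: "finite {card S | S. independent_set V E S}"
  proof -
    have "{card S | S. independent_set V E S} \<subseteq> card ` Pow V"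
      by (auto simp: independent_set_def)
    then show ?thesis using assms(1) finite_subset by blast
  qed
  have ne: "{card S | S. independent_set V E S} \<noteq> {}"
    by (auto simp: independent_set_def)
  show ?thesis using Max_in[OF fin ne] unfolding independence_number_def by auto
qed

lemma cw:
  assumes sym: "\<And>u w. E u w \<Longrightarrow> E w u" and irr: "\<And>u. \<not> E u u"
  shows "finite V \<Longrightarrow> (\<And>v. v \<in> V \<Longrightarrow> p v \<ge> 0) \<Longrightarrow>
     (\<Sum>v\<in>V. p v / PP p V E v) \<le> real (independence_number V E)"
proof (induction V rule: finite_psubset_induct)
  case (psubset V)
  show ?case
  proof (cases "V = {}")
    case True then show ?thesis by simp
  next
    case False
    define m where "m = Min (PP p V E ` V)"
    have "m \<in> PP p V E ` V" unfolding m_def using False psubset.hyps by (intro Min_in) auto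
    then obtain u where u: "u \<in> V" "PP p V E u = m" by auto
    have umin: "\<And>w. w \<in> V \<Longrightarrow> PP p V E u \<le> PP p V E w"
      using u psubset.hyps unfolding m_def by auto
    define N where "N = closed_nbhd V E u"
    have NV: "N \<subseteq> V" using u by (auto simp: N_def closed_nbhd_def)
    have uN: "u \<in> N" by (simp add: N_def closed_nbhd_def)
    define V' where "V' = V - N"
    have V'sub: "V' \<subset> V" using uN u by (auto simp: V'_def)
    have finN: "finite N" using NV psubset.hyps finite_subset by blast
    have split: "(\<Sum>v\<in>V. p v / PP p V E v) = (\<Sum>v\<in>N. p v / PP p V E v) + (\<Sum>v\<in>V'. p v / PP p V E v)"
      unfolding V'_def using NV psubset.hyps by (metis sum.subset_diff add.commute)
    have part1: "(\<Sum>v\<in>N. p v / PP p V E v) \<le> 1"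
    proof (cases "PP p V E u = 0")
      case True
      have "\<forall>w\<in>N. p w = 0"
        using True finN psubset.prems NV unfolding PP_def N_def[symmetric]
        by (subst (asm) sum_nonneg_eq_0_iff) auto
      then show ?thesis by simp
    next
      case False
      have pos: "PP p V E u > 0"
        using False psubset.prems NV unfolding PP_def N_def[symmetric]
        by (metis less_eq_real_def subsetD sum_nonneg)
      have "(\<Sum>v\<in>N. p v / PP p V E v) \<le> (\<Sum>v\<in>N. p v / PP p V E u)"
      proof (rule sum_mono)
        fix v assume "v \<in> N"
        then show "p v / PP p V E v \<le> p v / PP p V E u"
          using pos umin[of v] NV psubset.prems[of v]
          by (intro divide_left_mono) auto
      qed
      also have "\<dots> = (\<Sum>v\<in>N. p v) / PP p V E u" by (simp add: sum_divide_distrib)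
      also have "\<dots> = 1" using pos unfolding PP_def N_def by simp
      finally show ?thesis .
    qed
    have part2: "(\<Sum>v\<in>V'. p v / PP p V E v) \<le> (\<Sum>v\<in>V'. p v / PP p V' E v)"
    proof (rule sum_mono)
      fix v assume vV': "v \<in> V'"
      have pv: "p v \<ge> 0" using vV' psubset.prems V'sub by auto
      have sub: "closed_nbhd V' E v \<subseteq> closed_nbhd V E v"
        using V'sub by (auto simp: closed_nbhd_def)
      have le: "PP p V' E v \<le> PP p V E v"
        unfolding PP_def
        using sub psubset.prems V'sub vV' finite_cn[OF psubset.hyps(1)]
        by (intro sum_mono2) (auto simp: closed_nbhd_def)
      show "p v / PP p V E v \<le> p v / PP p V' E v"
      proof (cases "PP p V' E v = 0")
        case True
        have "p v = 0"
          using True psubset.prems V'sub vV' finite_cn[of V' E v] psubset.hyps(1)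
          unfolding PP_def
          by (subst (asm) sum_nonneg_eq_0_iff) (auto simp: closed_nbhd_def dest: finite_subset)
        then show ?thesis by simp
      next
        case False
        have "PP p V' E v \<ge> 0" unfolding PP_def using psubset.prems V'sub vV'
          by (intro sum_nonneg) (auto simp: closed_nbhd_def)
        then show ?thesis using False le pv by (intro divide_left_mono) auto
      qed
    qed
    have IH: "(\<Sum>v\<in>V'. p v / PP p V' E v) \<le> real (independence_number V' E)"
      using psubset.IH[OF V'sub] psubset.prems V'sub by auto
    have finV': "finite V'" using psubset.hyps unfolding V'_def by simp
    obtain S where S: "independent_set V' E S" "card S = independence_number V' E"
      using indep_ex[OF finV', of E] by blast
    have "independent_set V E (insert u S)"
      using S(1) u sym irr unfolding independent_set_def V'_def N_def closed_nbhd_def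
      by blast
    moreover have "u \<notin> S" using S(1) uN unfolding independent_set_def V'_def by auto
    moreover have "finite S" using S(1) unfolding independent_set_def
      by (meson finV' rev_finite_subset)
    ultimately have "independence_number V' E + 1 \<le> independence_number V E"
      using indep_le[OF psubset.hyps(1), of E "insert u S"] S(2) by simp
    then show ?thesis using split part1 part2 IH by linarith
  qed
qed

theorem lemma3:
  fixes V :: "'a set" and E :: "'a \<Rightarrow> 'a \<Rightarrow> bool"
    and K :: nat and p :: "nat \<Rightarrow> 'a \<Rightarrow> real" and i :: nat
  assumes "finite V"
    and "\<And>u w. E u w \<Longrightarrow> E w u"
    and "\<And>u. \<not> E u u"
    and "K \<ge> 1"
    and "\<And>j v. j \<in> {1..K} \<Longrightarrow> v \<in> V \<Longrightarrow> p j v \<ge> 0"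
    and "\<And>v. v \<in> V \<Longrightarrow> (\<Sum>j\<in>{1..K}. p j v) = 1"
    and "i \<in> {1..K}"
  shows "(\<Sum>v\<in>V. (if p i v = 0 then 0
            else p i v / (1 - (\<Prod>v'\<in>closed_nbhd V E v. (1 - p i v')))))
         \<le> (1 / (1 - exp (-1))) * (real (independence_number V E) + (\<Sum>v\<in>V. p i v))"
proof -
  define c where "c = 1 - exp (-1::real)"
  have cpos: "c > 0" unfolding c_def by simp
  have nn: "\<And>v. v \<in> V \<Longrightarrow> p i v \<ge> 0" using assms(5,7) by auto
  have le1: "\<And>v. v \<in> V \<Longrightarrow> p i v \<le> 1"
  proof -
    fix v assume v: "v \<in> V"
    have "p i v \<le> (\<Sum>j\<in>{1..K}. p j v)"
      using assms(5)[OF _ v] assms(7) by (intro member_le_sum) auto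
    then show "p i v \<le> 1" using assms(6)[OF v] by simp
  qed
  have tm: "(if p i v = 0 then 0
            else p i v / (1 - (\<Prod>v'\<in>closed_nbhd V E v. (1 - p i v'))))
         \<le> (1 / c) * (p i v + p i v / PP (p i) V E v)" if v: "v \<in> V" for v
  proof (cases "p i v = 0")
    case True then show ?thesis by simp
  next
    case False
    have ppos: "p i v > 0" using False nn[OF v] by simp
    let ?N = "closed_nbhd V E v"
    have NV: "?N \<subseteq> V" using v by (auto simp: closed_nbhd_def)
    have finN: "finite ?N" using finite_cn[OF assms(1)] .
    define P where "P = PP (p i) V E v"
    have PgE: "p i v \<le> P" unfolding P_def PP_def using finN NV nn
      by (intro member_le_sum) (auto simp: closed_nbhd_def)
    have Ppos: "P > 0" using PgE ppos by simp
    have "(\<Prod>v'\<in>?N. (1 - p i v')) \<le> (\<Prod>v'\<in>?N. exp (- p i v'))"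
      using NV le1 by (intro prod_mono) (auto simp: subsetD, metis add.commute diff_conv_add_uminus exp_ge_add_one_self)
    also have "\<dots> = exp (- P)" unfolding P_def PP_def
      by (simp add: exp_sum[OF finN, symmetric] sum_negf)
    finally have Q: "(\<Prod>v'\<in>?N. (1 - p i v')) \<le> exp (- P)" .
    have m: "c * min 1 P \<le> 1 - exp (-P)" unfolding c_def using exp_bound Ppos by simp
    have mpos: "c * min 1 P > 0" using cpos Ppos by simp
    have "p i v / (1 - (\<Prod>v'\<in>?N. (1 - p i v'))) \<le> p i v / (c * min 1 P)"
      using Q m mpos ppos by (intro divide_left_mono) auto
    also have "\<dots> = (1/c) * (p i v / min 1 P)" by simp
    also have "\<dots> \<le> (1/c) * (p i v + p i v / P)"
    proof (rule mult_left_mono)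
      show "p i v / min 1 P \<le> p i v + p i v / P"
      proof (cases "P \<le> 1")
        case True then show ?thesis using ppos by simp
      next
        case False
        then show ?thesis using ppos Ppos by (simp add: min_def)
      qed
    qed (use cpos in simp)
    finally show ?thesis using False by (simp add: P_def)
  qed
  have "(\<Sum>v\<in>V. (if p i v = 0 then 0
            else p i v / (1 - (\<Prod>v'\<in>closed_nbhd V E v. (1 - p i v')))))
     \<le> (\<Sum>v\<in>V. (1 / c) * (p i v + p i v / PP (p i) V E v))"
    using tm by (intro sum_mono) auto
  also have "\<dots> = (1/c) * ((\<Sum>v\<in>V. p i v) + (\<Sum>v\<in>V. p i v / PP (p i) V E v))"
    by (simp add: sum_distrib_left sum.distrib flip: sum_divide_distrib)
  also have "\<dots> \<le> (1/c) * ((\<Sum>v\<in>V. p i v) + real (independence_number V E))"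
  proof -
    have "(\<Sum>v\<in>V. p i v / PP (p i) V E v) \<le> real (independence_number V E)"
      using cw[of E V "p i"] assms(2,3,1) nn by blast
    then show ?thesis using cpos by (intro mult_left_mono) auto
  qed
  finally show ?thesis unfolding c_def by (simp add: add.commute)
qed

end
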